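(* Backward proof search in $\mathsf{G4iSLt}$ is strongly terminating: there is no infinite sequence of sequents $S_0,S_1,S_2,\dots$ such that for every $k\ge 0$, $S_{k+1}$ is a premise of some instance of a rule of $\mathsf{G4iSLt}$ whose conclusion is $S_k$. Consequently, for every sequent, every tree obtained by repeatedly applying rules of $\mathsf{G4iSLt}$ backwards in any order is finite.
   Context: Formulas are built by the grammar $\varphi ::= p \mid \bot \mid \varphi\land\varphi \mid \varphi\lor\varphi \mid \varphi\to\varphi \mid \Box\varphi$, with $p$ ranging over a countably infinite set of propositional variables. For a multiset $\Gamma$, $\Box\Gamma=\{\Box\psi:\psi\in\Gamma\}$; a boxed formula is one of the form $\Box\psi$. A sequent is $\Gamma\Rightarrow\chi$ with $\Gamma$ a finite multiset of formulas and $\chi$ a formula. The sequent calculus $\mathsf{G4iSLt}$ has the following rules, where $p$ is a propositional variable and $\Phi$ always denotes a multiset containing no boxed formula: (⊥L) $\bot,\Gamma\Rightarrow\chi$ (no premise); (IdP) $\Gamma,p\Rightarrow p$ (no premise); (∧L) from $\Gamma,\varphi,\psi\Rightarrow\chi$ infer $\Gamma,\varphi\land\psi\Rightarrow\chi$; (∧R) from $\Gamma\Rightarrow\varphi$ and $\Gamma\Rightarrow\psi$ infer $\Gamma\Rightarrow\varphi\land\psi$; (∨L) from $\Gamma,\varphi\Rightarrow\chi$ and $\Gamma,\psi\Rightarrow\chi$ infer $\Gamma,\varphi\lor\psi\Rightarrow\chi$; (∨R$_i$), $i\in\{1,2\}$: from $\Gamma\Rightarrow\varphi_i$ infer $\Gamma\Rightarrow\varphi_1\lor\varphi_2$;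 (p→L) from $\Gamma,p,\varphi\Rightarrow\chi$ infer $\Gamma,p,p\to\varphi\Rightarrow\chi$; (→R) from $\Gamma,\varphi\Rightarrow\psi$ infer $\Gamma\Rightarrow\varphi\to\psi$; (□→L) from $\Phi,\Gamma,\psi,\Box\varphi\Rightarrow\varphi$ and $\Phi,\Box\Gamma,\psi\Rightarrow\chi$ infer $\Phi,\Box\Gamma,\Box\varphi\to\psi\Rightarrow\chi$; (SLtR) from $\Phi,\Gamma,\Box\varphi\Rightarrow\varphi$ infer $\Phi,\Box\Gamma\Rightarrow\Box\varphi$; (∧→L) from $\Gamma,\varphi\to(\psi\to\chi)\Rightarrow\delta$ infer $\Gamma,(\varphi\land\psi)\to\chi\Rightarrow\delta$; (∨→L) from $\Gamma,\varphi\to\chi,\psi\to\chi\Rightarrow\delta$ infer $\Gamma,(\varphi\lor\psi)\to\chi\Rightarrow\delta$; (→→L) from $\Gamma,\psi\to\chi\Rightarrow\varphi\to\psi$ and $\Gamma,\chi\Rightarrow\delta$ infer $\Gamma,(\varphi\to\psi)\to\chi\Rightarrow\delta$. *)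

theory Defs
  imports "HOL-Library.Multiset"
begin

datatype form =
    Atom nat
  | Bot
  | And form form
  | Or form form
  | Imp form form
  | Box form

type_synonym sequent = "form multiset \<times> form"

definition is_boxed :: "form \<Rightarrow> bool" where
  "is_boxed f \<longleftrightarrow> (\<exists>g. f = Box g)"

definition no_boxed :: "form multiset \<Rightarrow> bool" where
  "no_boxed \<Phi> \<longleftrightarrow> (\<forall>f \<in># \<Phi>. \<not> is_boxed f)"

inductive rule_inst :: "sequent list \<Rightarrow> sequent \<Rightarrow> bool" where
  BotL: "rule_inst [] (add_mset Bot \<Gamma>, \<chi>)"
| IdP: "rule_inst [] (add_mset (Atom p) \<Gamma>, Atom p)"
| AndL: "rule_inst [(add_mset \<phi> (add_mset \<psi> \<Gamma>), \<chi>)] (add_mset (And \<phi> \<psi>) \<Gamma>, \<chi>)"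
| AndR: "rule_inst [(\<Gamma>, \<phi>), (\<Gamma>, \<psi>)] (\<Gamma>, And \<phi> \<psi>)"
| OrL: "rule_inst [(add_mset \<phi> \<Gamma>, \<chi>), (add_mset \<psi> \<Gamma>, \<chi>)] (add_mset (Or \<phi> \<psi>) \<Gamma>, \<chi>)"
| OrR1: "rule_inst [(\<Gamma>, \<phi>)] (\<Gamma>, Or \<phi> \<psi>)"
| OrR2: "rule_inst [(\<Gamma>, \<psi>)] (\<Gamma>, Or \<phi> \<psi>)"
| AtImpL: "rule_inst [(add_mset (Atom p) (add_mset \<phi> \<Gamma>), \<chi>)]
                     (add_mset (Atom p) (add_mset (Imp (Atom p) \<phi>) \<Gamma>), \<chi>)"
| ImpR: "rule_inst [(add_mset \<phi> \<Gamma>, \<psi>)] (\<Gamma>, Imp \<phi> \<psi>)"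
| BoxImpL: "no_boxed \<Phi> \<Longrightarrow>
    rule_inst [(\<Phi> + \<Gamma> + {#\<psi>, Box \<phi>#}, \<phi>), (\<Phi> + image_mset Box \<Gamma> + {#\<psi>#}, \<chi>)]
              (\<Phi> + image_mset Box \<Gamma> + {#Imp (Box \<phi>) \<psi>#}, \<chi>)"
| SLtR: "no_boxed \<Phi> \<Longrightarrow>
    rule_inst [(\<Phi> + \<Gamma> + {#Box \<phi>#}, \<phi>)] (\<Phi> + image_mset Box \<Gamma>, Box \<phi>)"
| AndImpL: "rule_inst [(add_mset (Imp \<phi> (Imp \<psi> \<chi>)) \<Gamma>, \<delta>)]
                      (add_mset (Imp (And \<phi> \<psi>) \<chi>) \<Gamma>, \<delta>)"
| OrImpL: "rule_inst [(add_mset (Imp \<phi> \<chi>) (add_mset (Imp \<psi> \<chi>) \<Gamma>), \<delta>)]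
                     (add_mset (Imp (Or \<phi> \<psi>) \<chi>) \<Gamma>, \<delta>)"
| ImpImpL: "rule_inst [(add_mset (Imp \<psi> \<chi>) \<Gamma>, Imp \<phi> \<psi>), (add_mset \<chi> \<Gamma>, \<delta>)]
                      (add_mset (Imp (Imp \<phi> \<psi>) \<chi>) \<Gamma>, \<delta>)"

definition is_premise_of :: "sequent \<Rightarrow> sequent \<Rightarrow> bool" where
  "is_premise_of S' S \<longleftrightarrow> (\<exists>ps. rule_inst ps S \<and> S' \<in> set ps)"

text \<open>A backward proof-search tree with root S, represented by positions
  (lists of child indices) mapped to sequents.\<close>
definition search_tree :: "sequent \<Rightarrow> (nat list \<Rightarrow> sequent option) \<Rightarrow> bool" where
  "search_tree S T \<longleftrightarrow>
     T [] = Some S \<and>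
     (\<forall>p i. T (p @ [i]) \<noteq> None \<longrightarrow> T p \<noteq> None) \<and>
     (\<forall>p C. T p = Some C \<longrightarrow>
        (\<forall>i. T (p @ [i]) = None) \<or>
        (\<exists>ps. rule_inst ps C \<and>
              (\<forall>i. T (p @ [i]) = (if i < length ps then Some (ps ! i) else None))))"

end

theory Submission
  imports Defs "HOL-Library.Multiset_Order"
begin

fun wt :: "form \<Rightarrow> nat" where
  "wt (Atom p) = 1"
| "wt Bot = 1"
| "wt (And a b) = wt a + wt b + 2"
| "wt (Or a b) = wt a + wt b + 1"
| "wt (Imp a b) = wt a + wt b + 1"
| "wt (Box a) = wt a + 1"

lemma wt_pos: "wt f \<ge> 1"
  by (induction f) auto

definition mu :: "sequent \<Rightarrow> nat multiset" where
  "mu S = image_mset wt (fst S) + {# wt (snd S) + 1 #}"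

lemma step:
  assumes "J \<noteq> {#}" "\<forall>k\<in>#K. \<exists>j\<in>#J. k < j" "A = I + K" "B = I + J"
  shows "A < (B::nat multiset)"
  using one_step_implies_multp[OF assms(1,2), of I] assms(3,4)
  by (simp add: less_multiset_def)

lemma rule_dec: "rule_inst ps S \<Longrightarrow> \<forall>S'\<in>set ps. mu S' < mu S"
proof (induction rule: rule_inst.induct)
  case (AndL \<phi> \<psi> \<Gamma> \<chi>)
  show ?case
    by (auto simp: mu_def intro!: step[where I="image_mset wt \<Gamma> + {#wt \<chi> + 1#}"
          and K="{#wt \<phi>, wt \<psi>#}" and J="{#wt \<phi> + wt \<psi> + 2#}"])
next
  case (AndR \<Gamma> \<phi> \<psi>)
  show ?case
    by (auto simp: mu_def intro!: step[where I="image_mset wt \<Gamma>"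
          and K="{#wt \<phi> + 1#}" and J="{#wt \<phi> + wt \<psi> + 3#}"]
          step[where I="image_mset wt \<Gamma>"
          and K="{#wt \<psi> + 1#}" and J="{#wt \<phi> + wt \<psi> + 3#}"])
next
  case (OrL \<phi> \<Gamma> \<chi> \<psi>)
  show ?case
    by (auto simp: mu_def intro!: step[where I="image_mset wt \<Gamma> + {#wt \<chi> + 1#}"
          and K="{#wt \<phi>#}" and J="{#wt \<phi> + wt \<psi> + 1#}"]
          step[where I="image_mset wt \<Gamma> + {#wt \<chi> + 1#}"
          and K="{#wt \<psi>#}" and J="{#wt \<phi> + wt \<psi> + 1#}"])
next
  case (OrR1 \<Gamma> \<phi> \<psi>)
  show ?case
    by (auto simp: mu_def intro!: step[where I="image_mset wt \<Gamma>"
          and K="{#wt \<phi> + 1#}" and J="{#wt \<phi> + wt \<psi> + 2#}"])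
next
  case (OrR2 \<Gamma> \<psi> \<phi>)
  show ?case
    by (auto simp: mu_def intro!: step[where I="image_mset wt \<Gamma>"
          and K="{#wt \<psi> + 1#}" and J="{#wt \<phi> + wt \<psi> + 2#}"])
next
  case (AtImpL p \<phi> \<Gamma> \<chi>)
  show ?case
    by (auto simp: mu_def intro!: step[where I="image_mset wt \<Gamma> + {#wt \<chi> + 1, 1#}"
          and K="{#wt \<phi>#}" and J="{#wt \<phi> + 2#}"])
next
  case (ImpR \<phi> \<Gamma> \<psi>)
  show ?case
    by (auto simp: mu_def intro!: step[where I="image_mset wt \<Gamma>"
          and K="{#wt \<phi>, wt \<psi> + 1#}" and J="{#wt \<phi> + wt \<psi> + 2#}"])
next
  case (BoxImpL \<Phi> \<Gamma> \<psi> \<phi> \<chi>)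
  have e1: "mu (\<Phi> + \<Gamma> + {#\<psi>, Box \<phi>#}, \<phi>) = image_mset wt \<Phi> + (image_mset wt \<Gamma> + {#wt \<psi>, wt \<phi> + 1, wt \<phi> + 1#})"
    by (simp add: mu_def)
  have e2: "mu (\<Phi> + image_mset Box \<Gamma> + {#Imp (Box \<phi>) \<psi>#}, \<chi>) = image_mset wt \<Phi> + (image_mset (\<lambda>g. wt g + 1) \<Gamma> + {#wt \<phi> + wt \<psi> + 2, wt \<chi> + 1#})"
    by (simp add: mu_def multiset.map_comp o_def)
  have p1: "mu (\<Phi> + \<Gamma> + {#\<psi>, Box \<phi>#}, \<phi>) < mu (\<Phi> + image_mset Box \<Gamma> + {#Imp (Box \<phi>) \<psi>#}, \<chi>)"
    using wt_pos[of \<psi>]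
    by (intro step[OF _ _ e1 e2]) auto
  have p2: "mu (\<Phi> + image_mset Box \<Gamma> + {#\<psi>#}, \<chi>) < mu (\<Phi> + image_mset Box \<Gamma> + {#Imp (Box \<phi>) \<psi>#}, \<chi>)"
    by (auto simp: mu_def ac_simps intro!: step[where I="image_mset wt \<Phi> + image_mset (\<lambda>g. wt g + 1) \<Gamma> + {#wt \<chi> + 1#}"
          and K="{#wt \<psi>#}" and J="{#wt \<phi> + wt \<psi> + 2#}"])
  show ?case using p1 p2 by simp
next
  case (SLtR \<Phi> \<Gamma> \<phi>)
  have e1: "mu (\<Phi> + \<Gamma> + {#Box \<phi>#}, \<phi>) = image_mset wt \<Phi> + (image_mset wt \<Gamma> + {#wt \<phi> + 1, wt \<phi> + 1#})"
    by (simp add: mu_def)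
  have e2: "mu (\<Phi> + image_mset Box \<Gamma>, Box \<phi>) = image_mset wt \<Phi> + (image_mset (\<lambda>g. wt g + 1) \<Gamma> + {#wt \<phi> + 2#})"
    by (simp add: mu_def multiset.map_comp o_def)
  have "mu (\<Phi> + \<Gamma> + {#Box \<phi>#}, \<phi>) < mu (\<Phi> + image_mset Box \<Gamma>, Box \<phi>)"
    by (intro step[OF _ _ e1 e2]) auto
  then show ?case by simp
next
  case (AndImpL \<phi> \<psi> \<chi> \<Gamma> \<delta>)
  show ?case
    by (auto simp: mu_def intro!: step[where I="image_mset wt \<Gamma> + {#wt \<delta> + 1#}"
          and K="{#wt \<phi> + wt \<psi> + wt \<chi> + 2#}" and J="{#wt \<phi> + wt \<psi> + wt \<chi> + 3#}"])
next
  case (OrImpL \<phi> \<chi> \<psi> \<Gamma> \<delta>)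
  show ?case
    by (auto simp: mu_def intro!: step[where I="image_mset wt \<Gamma> + {#wt \<delta> + 1#}"
          and K="{#wt \<phi> + wt \<chi> + 1, wt \<psi> + wt \<chi> + 1#}" and J="{#wt \<phi> + wt \<psi> + wt \<chi> + 2#}"])
next
  case (ImpImpL \<psi> \<chi> \<Gamma> \<phi> \<delta>)
  have e1: "mu (add_mset (Imp \<psi> \<chi>) \<Gamma>, Imp \<phi> \<psi>) = image_mset wt \<Gamma> + {#wt \<psi> + wt \<chi> + 1, wt \<phi> + wt \<psi> + 2#}"
    by (simp add: mu_def)
  have e2: "mu (add_mset (Imp (Imp \<phi> \<psi>) \<chi>) \<Gamma>, \<delta>) = image_mset wt \<Gamma> + {#wt \<phi> + wt \<psi> + wt \<chi> + 2, wt \<delta> + 1#}"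
    by (simp add: mu_def)
  have p1: "mu (add_mset (Imp \<psi> \<chi>) \<Gamma>, Imp \<phi> \<psi>) < mu (add_mset (Imp (Imp \<phi> \<psi>) \<chi>) \<Gamma>, \<delta>)"
    using wt_pos[of \<chi>] wt_pos[of \<phi>]
    by (intro step[OF _ _ e1 e2]) auto
  have p2: "mu (add_mset \<chi> \<Gamma>, \<delta>) < mu (add_mset (Imp (Imp \<phi> \<psi>) \<chi>) \<Gamma>, \<delta>)"
    by (auto simp: mu_def intro!: step[where I="image_mset wt \<Gamma> + {#wt \<delta> + 1#}"
          and K="{#wt \<chi>#}" and J="{#wt \<phi> + wt \<psi> + wt \<chi> + 2#}"])
  show ?case using p1 p2 by simp
qed auto

lemma prem_dec: "is_premise_of S' S \<Longrightarrow> mu S' < mu S"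
  using rule_dec unfolding is_premise_of_def by blast

lemma part1: "\<not> (\<exists>f :: nat \<Rightarrow> sequent. \<forall>k. is_premise_of (f (Suc k)) (f k))"
proof
  assume "\<exists>f :: nat \<Rightarrow> sequent. \<forall>k. is_premise_of (f (Suc k)) (f k)"
  then obtain f :: "nat \<Rightarrow> sequent" where f: "\<And>k. is_premise_of (f (Suc k)) (f k)" by blast
  have "\<And>k. (mu (f (Suc k)), mu (f k)) \<in> {(M, N). M < N}" using prem_dec[OF f] by simp
  then have "\<exists>g. \<forall>i. (g (Suc i), g i) \<in> {(M :: nat multiset, N). M < N}"
    by (intro exI[of _ "\<lambda>k. mu (f k)"]) simp
  with wf_less_multiset show False
    unfolding wf_iff_no_infinite_down_chain by blast
qed

lemma prefix_some:
  assumes "\<forall>p i. T (p @ [i]) \<noteq> None \<longrightarrow> T p \<noteq> None"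
  shows "T (p @ q) \<noteq> None \<Longrightarrow> q \<noteq> [] \<Longrightarrow> T (p @ [hd q]) \<noteq> None"
proof (induction q rule: rev_induct)
  case Nil then show ?case by simp
next
  case (snoc x xs)
  show ?case
  proof (cases "xs = []")
    case True then show ?thesis using snoc by simp
  next
    case False
    have "T (p @ xs) \<noteq> None" using assms snoc.prems(1) by (metis append.assoc)
    then show ?thesis using snoc.IH False by simp
  qed
qed

lemma part2:
  assumes st: "search_tree S T"
  shows "T p = Some C \<Longrightarrow> finite {q. T (p @ q) \<noteq> None}"
proof (induction "mu C" arbitrary: C p rule: less_induct)
  case less
  have pc: "\<forall>p i. T (p @ [i]) \<noteq> None \<longrightarrow> T p \<noteq> None"
    and ex: "\<forall>p C. T p = Some C \<longrightarrow>
        (\<forall>i. T (p @ [i]) = None) \<or>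
        (\<exists>ps. rule_inst ps C \<and>
              (\<forall>i. T (p @ [i]) = (if i < length ps then Some (ps ! i) else None)))"
    using st unfolding search_tree_def by auto
  from ex less.prems consider "\<forall>i. T (p @ [i]) = None"
    | ps where "rule_inst ps C" "\<forall>i. T (p @ [i]) = (if i < length ps then Some (ps ! i) else None)"
    by blast
  then show ?case
  proof cases
    case 1
    have "{q. T (p @ q) \<noteq> None} \<subseteq> {[]}"
    proof
      fix q assume "q \<in> {q. T (p @ q) \<noteq> None}"
      then have "T (p @ q) \<noteq> None" by simp
      then show "q \<in> {[]}" using prefix_some[OF pc, of p q] 1 by (cases "q = []") auto
    qed
    then show ?thesis using finite_subset by blast
  next
    case 2
    have sub: "{q. T (p @ q) \<noteq> None} \<subseteq>
       insert [] (\<Union>i<length ps. Cons i ` {q. T ((p @ [i]) @ q) \<noteq> None})"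
    proof
      fix q assume "q \<in> {q. T (p @ q) \<noteq> None}"
      then have q: "T (p @ q) \<noteq> None" by simp
      show "q \<in> insert [] (\<Union>i<length ps. Cons i ` {q. T ((p @ [i]) @ q) \<noteq> None})"
      proof (cases q)
        case Nil then show ?thesis by simp
      next
        case (Cons i q')
        have "T (p @ [i]) \<noteq> None" using prefix_some[OF pc, of p q] q Cons by simp
        then have "i < length ps" using 2(2) by (metis option.distinct(1))
        then show ?thesis using q Cons by auto
      qed
    qed
    have "finite {q. T ((p @ [i]) @ q) \<noteq> None}" if "i < length ps" for i
    proof -
      have "T (p @ [i]) = Some (ps ! i)" using 2(2) that by simp
      moreover have "mu (ps ! i) < mu C" using rule_dec[OF 2(1)] that by simp
      ultimately show ?thesis using less.hyps by blast
    qed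
    then have "finite (insert [] (\<Union>i<length ps. Cons i ` {q. T ((p @ [i]) @ q) \<noteq> None}))"
      by auto
    then show ?thesis using sub finite_subset by blast
  qed
qed

theorem mainTheorem15:
  shows "(\<not> (\<exists>f :: nat \<Rightarrow> sequent. \<forall>k. is_premise_of (f (Suc k)) (f k)))
       \<and> (\<forall>S T. search_tree S T \<longrightarrow> finite {p. T p \<noteq> None})"
proof (intro conjI allI impI)
  show "\<not> (\<exists>f :: nat \<Rightarrow> sequent. \<forall>k. is_premise_of (f (Suc k)) (f k))" by (rule part1)
next
  fix S T assume st: "search_tree S T"
  then have "T [] = Some S" unfolding search_tree_def by simp
  from part2[OF st this] show "finite {p. T p \<noteq> None}" by simp
qed

end
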